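(* Let $(\Omega,\mu)$ be a measure space, $p\ge3$, and let $(u_k)$, $u$ be real-valued functions in $L^p(\Omega,\mu)$ such that $u_k\rightharpoonup u$ weakly and $u_k\rightharpoondown u$ in $L^p(\Omega,\mu)$. Then $$\liminf_{k\to\infty}\Big(\int_\Omega|u_k|^pd\mu-\int_\Omega|u|^pd\mu-\int_\Omega|u_k-u|^pd\mu\Big)\ge0.$$
   Context: $u_k\rightharpoondown u$ (Δ-convergence) in a Banach space $X$ means: for every $v\in X$, $\limsup_{k\to\infty}(\|u_k-u\|-\|u_k-v\|)\le0$. *)

theory Defs
  imports "HOL-Analysis.Analysis"
begin

definition memLp :: "'a measure \<Rightarrow> real \<Rightarrow> ('a \<Rightarrow> real) \<Rightarrow> bool" where
  "memLp M p f \<longleftrightarrow> f \<in> borel_measurable M \<and> integrable M (\<lambda>x. \<bar>f x\<bar> powr p)"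

definition Lp_norm :: "'a measure \<Rightarrow> real \<Rightarrow> ('a \<Rightarrow> real) \<Rightarrow> real" where
  "Lp_norm M p f = (\<integral>x. \<bar>f x\<bar> powr p \<partial>M) powr (1 / p)"

definition Lp_dual :: "'a measure \<Rightarrow> real \<Rightarrow> (('a \<Rightarrow> real) \<Rightarrow> real) set" where
  "Lp_dual M p = {\<phi>.
     (\<forall>f g a b. memLp M p f \<longrightarrow> memLp M p g \<longrightarrow>
        \<phi> (\<lambda>x. a * f x + b * g x) = a * \<phi> f + b * \<phi> g) \<and>
     (\<exists>C. \<forall>f. memLp M p f \<longrightarrow> \<bar>\<phi> f\<bar> \<le> C * Lp_norm M p f)}"

definition Lp_weak_conv :: "'a measure \<Rightarrow> real \<Rightarrow> (nat \<Rightarrow> 'a \<Rightarrow> real) \<Rightarrow> ('a \<Rightarrow> real) \<Rightarrow> bool" where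
  "Lp_weak_conv M p u U \<longleftrightarrow> (\<forall>\<phi>\<in>Lp_dual M p. (\<lambda>k. \<phi> (u k)) \<longlonglongrightarrow> \<phi> U)"

definition Lp_Delta_conv :: "'a measure \<Rightarrow> real \<Rightarrow> (nat \<Rightarrow> 'a \<Rightarrow> real) \<Rightarrow> ('a \<Rightarrow> real) \<Rightarrow> bool" where
  "Lp_Delta_conv M p u U \<longleftrightarrow> (\<forall>v. memLp M p v \<longrightarrow>
     limsup (\<lambda>k. ereal (Lp_norm M p (\<lambda>x. u k x - U x) - Lp_norm M p (\<lambda>x. u k x - v x))) \<le> 0)"

end

theory Submission
  imports Defs
begin


definition sgp :: "real \<Rightarrow> real \<Rightarrow> real" where "sgp p x = sgn x * \<bar>x\<bar> powr (p - 1)"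

lemma abs_powr_deriv_nz:
  fixes x r :: real assumes "x \<noteq> 0"
  shows "((\<lambda>y. \<bar>y\<bar> powr r) has_real_derivative r * (sgn x * \<bar>x\<bar> powr (r - 1))) (at x)"
proof (cases "x > 0")
  case True
  have "((\<lambda>y. y powr r) has_real_derivative r * x powr (r-1)) (at x)"
    using True by (rule has_real_derivative_powr)
  then have "((\<lambda>y. \<bar>y\<bar> powr r) has_real_derivative r * x powr (r-1)) (at x)"
    by (rule has_field_derivative_transform_within_open[where S="{0<..}"]) (use True in auto)
  then show ?thesis using True by simp
next
  case False
  then have neg: "x < 0" using assms by simp
  have "((\<lambda>y. (-y) powr r) has_real_derivative r * (-x) powr (r - of_nat 1) * -1) (at x)"
    by (rule DERIV_fun_powr) (auto intro!: derivative_eq_intros simp: neg)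
  then have "((\<lambda>y. \<bar>y\<bar> powr r) has_real_derivative r * (-x) powr (r - of_nat 1) * -1) (at x)"
    by (rule has_field_derivative_transform_within_open[where S="{..<0}"]) (use neg in auto)
  then show ?thesis using neg by simp
qed

lemma abs_powr_deriv0:
  fixes p :: real assumes "p > 1"
  shows "((\<lambda>y. \<bar>y\<bar> powr p) has_real_derivative 0) (at 0)"
proof -
  have 1: "((\<lambda>y. \<bar>y\<bar> powr (p - 1)) \<longlongrightarrow> 0) (at (0::real))"
    by (rule tendsto_zero_powrI) (auto intro!: tendsto_eq_intros simp: assms)
  have "((\<lambda>y. \<bar>(\<bar>y\<bar> powr p - \<bar>0\<bar> powr p) / (y - 0)\<bar>) \<longlongrightarrow> 0) (at (0::real))"
  proof (rule Lim_transform_eventually[OF 1])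
    show "\<forall>\<^sub>F y in at 0. \<bar>y\<bar> powr (p - 1) = \<bar>(\<bar>y\<bar> powr p - \<bar>0\<bar> powr p) / (y - 0)\<bar>"
      unfolding eventually_at using assms
      by (intro exI[of _ 1]) (auto simp: powr_diff abs_divide)
  qed
  then show ?thesis
    unfolding has_field_derivative_iff by (rule tendsto_rabs_zero_cancel)
qed

lemma abs_powr_deriv:
  fixes p x :: real assumes "p > 1"
  shows "((\<lambda>y. \<bar>y\<bar> powr p) has_real_derivative p * sgp p x) (at x)"
proof (cases "x = 0")
  case True then show ?thesis using abs_powr_deriv0[OF assms] by (simp add: sgp_def)
next
  case False then show ?thesis using abs_powr_deriv_nz[OF False, of p] by (simp add: sgp_def)
qed

lemma sgp_deriv:
  fixes p x :: real assumes "p > 2"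
  shows "(sgp p has_real_derivative (p-1) * \<bar>x\<bar> powr (p-2)) (at x)"
proof (cases "x = 0")
  case True
  have 1: "((\<lambda>y. \<bar>y\<bar> powr (p - 2)) \<longlongrightarrow> 0) (at (0::real))"
    by (rule tendsto_zero_powrI) (auto intro!: tendsto_eq_intros simp: assms)
  have "((\<lambda>y. \<bar>(sgp p y - sgp p 0) / (y - 0)\<bar>) \<longlongrightarrow> 0) (at (0::real))"
  proof (rule Lim_transform_eventually[OF 1])
    show "\<forall>\<^sub>F y in at 0. \<bar>y\<bar> powr (p - 2) = \<bar>(sgp p y - sgp p 0) / (y - 0)\<bar>"
      unfolding eventually_at using assms
      by (intro exI[of _ 1]) (auto simp: sgp_def powr_diff abs_divide abs_mult power2_eq_square)
  qed
  then show ?thesis using True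
    unfolding has_field_derivative_iff by (auto intro: tendsto_rabs_zero_cancel)
next
  case False
  show ?thesis
  proof (cases "x > 0")
    case True
    have "((\<lambda>y. y powr (p-1)) has_real_derivative (p-1) * x powr (p-1-1)) (at x)"
      using True by (rule has_real_derivative_powr)
    then have "(sgp p has_real_derivative (p-1) * x powr (p-1-1)) (at x)"
      by (rule has_field_derivative_transform_within_open[where S="{0<..}"]) (use True in \<open>auto simp: sgp_def\<close>)
    then show ?thesis using True by (simp add: algebra_simps)
  next
    case False
    then have neg: "x < 0" using \<open>x \<noteq> 0\<close> by simp
    have "((\<lambda>y. (-y) powr (p-1)) has_real_derivative (p-1) * (-x) powr (p-1 - of_nat 1) * -1) (at x)"
      by (rule DERIV_fun_powr) (auto intro!: derivative_eq_intros simp: neg)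
    then have "((\<lambda>y. - ((-y) powr (p-1))) has_real_derivative - ((p-1) * (-x) powr (p-1 - of_nat 1) * -1)) (at x)"
      by (rule DERIV_minus)
    then have "(sgp p has_real_derivative - ((p-1) * (-x) powr (p-1 - of_nat 1) * -1)) (at x)"
      by (rule has_field_derivative_transform_within_open[where S="{..<0}"]) (use neg in \<open>auto simp: sgp_def\<close>)
    then show ?thesis using neg by (simp add: algebra_simps)
  qed
qed


lemma powr_tangent:
  fixes r x y :: real assumes r: "r \<ge> 1" and x: "0 \<le> x" and y: "0 \<le> y"
  shows "x powr r + r * x powr (r-1) * (y - x) \<le> y powr r"
proof (cases "x = 0")
  case True then show ?thesis by simp
next
  case False
  then have xp: "x > 0" using x by simp
  show ?thesis
  proof (cases "y = 0")
    case True
    have "x powr (r-1) * x = x powr r" using xp by (simp add: powr_diff)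
    then have "x powr r + r * x powr (r-1) * (y - x) = (1 - r) * x powr r"
      using True by (simp add: algebra_simps)
    also have "\<dots> \<le> 0" using r by (simp add: mult_nonpos_nonneg)
    finally show ?thesis using True by simp
  next
    case False
    then have yp: "y > 0" using y by simp
    have "y powr r - x powr r \<ge> r * x powr (r-1) * (y - x)"
    proof (rule convex_on_imp_above_tangent[OF powr_convex[OF r]])
      show "connected ({0<..} :: real set)" by simp
      show "x \<in> interior {0<..}" using xp by (subst interior_open) auto
      show "y \<in> {0<..}" using yp by simp
      show "((\<lambda>x. x powr r) has_real_derivative r * x powr (r - 1)) (at x within {0<..})"
        by (rule has_field_derivative_at_within, rule has_real_derivative_powr[OF xp])
    qed
    then show ?thesis by simp
  qed
qed

lemma abs_tangent:
  fixes r x y :: real assumes r: "r \<ge> 1"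
  shows "\<bar>x\<bar> powr r + r * (sgn x * \<bar>x\<bar> powr (r-1)) * (y - x) \<le> \<bar>y\<bar> powr r"
proof -
  have 1: "sgn x * (y - x) \<le> \<bar>y\<bar> - \<bar>x\<bar>"
    by (cases "x > 0"; cases "x < 0") (auto simp: sgn_if)
  have "r * (sgn x * \<bar>x\<bar> powr (r-1)) * (y - x) = r * \<bar>x\<bar> powr (r-1) * (sgn x * (y - x))"
    by (simp add: algebra_simps)
  also have "\<dots> \<le> r * \<bar>x\<bar> powr (r-1) * (\<bar>y\<bar> - \<bar>x\<bar>)"
    using r 1 by (intro mult_left_mono) auto
  finally show ?thesis using powr_tangent[OF r, of "\<bar>x\<bar>" "\<bar>y\<bar>"] by simp
qed

lemma sgp_deriv_chain[derivative_intros]: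
  "p > 2 \<Longrightarrow> (f has_real_derivative D) (at x) \<Longrightarrow>
   ((\<lambda>x. sgp p (f x)) has_real_derivative (p-1) * \<bar>f x\<bar> powr (p-2) * D) (at x)"
  using DERIV_chain2[OF sgp_deriv] by blast

lemma abs_powr_deriv_chain[derivative_intros]:
  "p > 1 \<Longrightarrow> (f has_real_derivative D) (at x) \<Longrightarrow>
   ((\<lambda>x. \<bar>f x\<bar> powr p) has_real_derivative p * sgp p (f x) * D) (at x)"
  using DERIV_chain2[OF abs_powr_deriv] by blast

lemma abs_powr_nz_deriv_chain:
  "f x \<noteq> 0 \<Longrightarrow> (f has_real_derivative D) (at x) \<Longrightarrow>
   ((\<lambda>x. \<bar>f x\<bar> powr r) has_real_derivative r * (sgn (f x) * \<bar>f x\<bar> powr (r - 1)) * D) (at x)"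
  using DERIV_chain2[OF abs_powr_deriv_nz] by blast

lemma sgp_cont: "p > 2 \<Longrightarrow> continuous_on S (sgp p)"
  using sgp_deriv by (meson DERIV_isCont continuous_at_imp_continuous_on)

lemma ineq5:
  fixes p a b :: real assumes p: "p \<ge> 3"
  shows "p * sgp p a * b + p * sgp p b * a \<le> \<bar>a+b\<bar> powr p - \<bar>a\<bar> powr p - \<bar>b\<bar> powr p"
proof -
  define G where "G b = sgp p (a+b) - sgp p a - sgp p b - (p-1) * \<bar>b\<bar> powr (p-2) * a" for b
  define F where "F b = \<bar>a+b\<bar> powr p - \<bar>a\<bar> powr p - \<bar>b\<bar> powr p - p * sgp p a * b - p * sgp p b * a" for b
  have G0: "G 0 = 0" using p by (simp add: G_def sgp_def)
  have F0: "F 0 = 0" using p by (simp add: F_def sgp_def)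
  have Gcont: "continuous_on S G" for S
  proof -
    have c1: "continuous_on S (\<lambda>x. sgp p (a+x))"
      by (rule continuous_on_compose2[of UNIV "sgp p"]) (use p in \<open>auto intro!: sgp_cont continuous_intros\<close>)
    have c2: "continuous_on S (\<lambda>x. \<bar>x\<bar> powr (p-2))"
      by (rule continuous_on_powr') (use p in \<open>auto intro: continuous_intros\<close>)
    show ?thesis unfolding G_def using p
      by (intro continuous_intros c1 c2 sgp_cont) auto
  qed
  have Gder: "\<exists>y. (G has_real_derivative y) (at b) \<and> y \<ge> 0" if "b \<noteq> 0" for b
  proof -
    have d1: "((\<lambda>z. \<bar>z\<bar> powr (p-2)) has_real_derivative (p-2) * (sgn b * \<bar>b\<bar> powr (p-2-1)) * 1) (at b)"
      by (rule abs_powr_nz_deriv_chain) (use that in \<open>auto intro: derivative_eq_intros\<close>)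
    have d2: "((\<lambda>z. (p-1) * \<bar>z\<bar> powr (p-2) * a) has_real_derivative (p-1) * ((p-2) * (sgn b * \<bar>b\<bar> powr (p-2-1)) * 1) * a) (at b)"
      by (intro DERIV_cmult_right DERIV_cmult d1)
    have d: "(G has_real_derivative (p-1) * \<bar>a+b\<bar> powr (p-2) * (0+1) - 0 - (p-1) * \<bar>b\<bar> powr (p-2) * 1
        - (p-1) * ((p-2) * (sgn b * \<bar>b\<bar> powr (p-2-1)) * 1) * a) (at b)"
      unfolding G_def using p that
      by (intro derivative_intros d2) auto
    have "\<bar>b\<bar> powr (p-2) + (p-2) * (sgn b * \<bar>b\<bar> powr (p-2-1)) * ((a+b) - b) \<le> \<bar>a+b\<bar> powr (p-2)"
      using p by (intro abs_tangent) auto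
    then have "0 \<le> (p-1) * (\<bar>a+b\<bar> powr (p-2) - \<bar>b\<bar> powr (p-2) - (p-2) * (sgn b * \<bar>b\<bar> powr (p-2-1)) * a)"
      using p by (intro mult_nonneg_nonneg) auto
    then show ?thesis using d by (intro exI[of _ _]) (auto simp: algebra_simps)
  qed
  have Fder: "(F has_real_derivative p * G b) (at b)" for b
  proof -
    have "(F has_real_derivative p * sgp p (a+b) * (0+1) - 0 - p * sgp p b * 1 - p * sgp p a * 1
           - p * ((p-1) * \<bar>b\<bar> powr (p-2) * 1) * a) (at b)"
      unfolding F_def using p
      by (intro derivative_intros DERIV_cmult DERIV_cmult_right sgp_deriv) auto
    then show ?thesis by (simp add: G_def algebra_simps)
  qed
  have Fcont: "continuous_on S F" for S
    using Fder by (meson DERIV_isCont continuous_at_imp_continuous_on)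
  show ?thesis
  proof (cases "b \<ge> 0")
    case True
    have Gpos: "G x \<ge> 0" if "x \<ge> 0" for x
    proof -
      have "G 0 \<le> G x"
        by (rule DERIV_nonneg_imp_increasing_open[OF that]) (use Gder Gcont in auto)
      then show ?thesis using G0 by simp
    qed
    have "F 0 \<le> F b"
      by (rule DERIV_nonneg_imp_increasing_open[OF True])
         (use Fder Gpos p Fcont in \<open>auto intro!: exI mult_nonneg_nonneg\<close>)
    then show ?thesis using F0 by (simp add: F_def sgp_def)
  next
    case False
    have Gneg: "G x \<le> 0" if "x \<le> 0" for x
    proof -
      have "G x \<le> G 0"
        by (rule DERIV_nonneg_imp_increasing_open[OF that]) (use Gder Gcont in auto)
      then show ?thesis using G0 by simp
    qed
    have "F b \<ge> F 0"
      by (rule DERIV_nonpos_imp_decreasing_open[of b 0]) 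
         (use False Fder Gneg p Fcont in \<open>auto intro!: exI mult_nonneg_nonpos\<close>)
    then show ?thesis using F0 by (simp add: F_def sgp_def)
  qed
qed


lemma sgp_lip:
  fixes p a b s :: real assumes p: "p > 2" and s: "0 \<le> s" "s \<le> 1"
  shows "(sgp p (b + s*a) - sgp p b) * a \<le> (p-1) * (\<bar>a\<bar>+\<bar>b\<bar>) powr (p-2) * s * a^2"
proof -
  define L where "L = (\<bar>a\<bar>+\<bar>b\<bar>) powr (p-2)"
  define m where "m \<sigma> = (p-1) * L * \<sigma> * a^2 - (sgp p (b + \<sigma>*a) - sgp p b) * a" for \<sigma>
  have mder: "(m has_real_derivative (p-1) * L * a^2 - ((p-1) * \<bar>b + \<sigma>*a\<bar> powr (p-2) * a) * a) (at \<sigma>)" for \<sigma>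
    unfolding m_def using p by (auto intro!: derivative_eq_intros)
  have "m 0 \<le> m s"
  proof (rule DERIV_nonneg_imp_increasing_open[OF s(1)])
    fix \<sigma> assume "0 < \<sigma>" "\<sigma> < s"
    then have "\<bar>b + \<sigma>*a\<bar> \<le> \<bar>a\<bar>+\<bar>b\<bar>"
    proof -
      have "\<bar>b + \<sigma>*a\<bar> \<le> \<bar>b\<bar> + \<bar>\<sigma>*a\<bar>" by (rule abs_triangle_ineq)
      moreover have "\<bar>\<sigma>*a\<bar> = \<sigma>*\<bar>a\<bar>" using \<open>0 < \<sigma>\<close> by (simp add: abs_mult)
      moreover have "\<sigma>*\<bar>a\<bar> \<le> \<bar>a\<bar>" using \<open>0 < \<sigma>\<close> \<open>\<sigma> < s\<close> s by (intro mult_left_le_one_le) auto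
      ultimately show ?thesis by linarith
    qed
    then have "\<bar>b + \<sigma>*a\<bar> powr (p-2) \<le> L" unfolding L_def using p by (intro powr_mono2) auto
    then have "(p-1) * \<bar>b + \<sigma>*a\<bar> powr (p-2) * a^2 \<le> (p-1) * L * a^2"
      using p by (intro mult_right_mono mult_left_mono) auto
    then show "\<exists>y. (m has_real_derivative y) (at \<sigma>) \<and> 0 \<le> y"
      using mder[of \<sigma>] by (intro exI[of _ _] conjI) (auto simp: power2_eq_square algebra_simps)
  next
    show "continuous_on {0..s} m" using mder by (meson DERIV_isCont continuous_at_imp_continuous_on)
  qed
  then show ?thesis by (simp add: m_def L_def)
qed

lemma taylor_raw:
  fixes p a b t :: real assumes p: "p > 2" and t: "0 \<le> t" "t \<le> 1"
  shows "\<bar>b + t*a\<bar> powr p \<le> \<bar>b\<bar> powr p + p * t * sgp p b * a + p*(p-1)/2 * (\<bar>a\<bar>+\<bar>b\<bar>) powr (p-2) * a^2 * t^2"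
proof -
  define L where "L = (\<bar>a\<bar>+\<bar>b\<bar>) powr (p-2)"
  define h where "h s = \<bar>b + s*a\<bar> powr p - \<bar>b\<bar> powr p - p * s * sgp p b * a - p*(p-1)/2 * L * a^2 * s^2" for s
  have hder: "(h has_real_derivative p * sgp p (b + s*a) * a - p * sgp p b * a - p*(p-1) * L * a^2 * s) (at s)" for s
    unfolding h_def using p by (auto intro!: derivative_eq_intros simp: field_simps power2_eq_square)
  have "h t \<le> h 0"
  proof (rule DERIV_nonpos_imp_decreasing_open[OF t(1)])
    fix s assume "0 < s" "s < t"
    then have "(sgp p (b + s*a) - sgp p b) * a \<le> (p-1) * L * s * a^2"
      unfolding L_def using t p by (intro sgp_lip) auto
    then have "p * ((sgp p (b + s*a) - sgp p b) * a) \<le> p * ((p-1) * L * s * a^2)"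
      using p by (intro mult_left_mono) auto
    moreover have "p * sgp p (b + s*a) * a - p * sgp p b * a - p*(p-1) * L * a^2 * s
       = p * ((sgp p (b + s*a) - sgp p b) * a) - p * ((p-1) * L * s * a^2)" by (simp add: algebra_simps)
    moreover have "p * ((p-1) * L * s * a^2) = p * (p-1) * L * a^2 * s" by (simp add: algebra_simps)
    ultimately have "p * sgp p (b + s*a) * a - p * sgp p b * a - p*(p-1) * L * a^2 * s \<le> 0" by linarith
    then show "\<exists>y. (h has_real_derivative y) (at s) \<and> y \<le> 0"
      using hder[of s] by blast
  next
    show "continuous_on {0..t} h" using hder by (meson DERIV_isCont continuous_at_imp_continuous_on)
  qed
  then show ?thesis using p by (simp add: h_def L_def sgp_def)
qed

lemma L_bound:
  fixes p a b :: real assumes p: "p > 2"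
  shows "(\<bar>a\<bar>+\<bar>b\<bar>) powr (p-2) * a^2 \<le> 2 powr p * (\<bar>a\<bar> powr p + \<bar>b\<bar> powr p)"
proof (cases "a = 0")
  case True then show ?thesis by (simp add: zero_le_mult_iff)
next
  case False
  define m where "m = max \<bar>a\<bar> \<bar>b\<bar>"
  have mpos: "m > 0" using False by (simp add: m_def less_max_iff_disj)
  have "(\<bar>a\<bar>+\<bar>b\<bar>) powr (p-2) \<le> (2*m) powr (p-2)"
    using p by (intro powr_mono2) (auto simp: m_def)
  moreover have "a^2 \<le> (2*m) powr 2"
  proof -
    have "\<bar>a\<bar>^2 \<le> (2*m)^2" using mpos
      by (intro power_mono) (auto simp: m_def)
    then show ?thesis using mpos by (simp add: powr_realpow)
  qed
  ultimately have "(\<bar>a\<bar>+\<bar>b\<bar>) powr (p-2) * a^2 \<le> (2*m) powr (p-2) * (2*m) powr 2"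
    by (intro mult_mono) auto
  also have "\<dots> = (2*m) powr p" by (simp add: powr_add[symmetric])
  also have "\<dots> = 2 powr p * m powr p" using mpos by (simp add: powr_mult)
  also have "m powr p \<le> \<bar>a\<bar> powr p + \<bar>b\<bar> powr p"
    by (auto simp: m_def max_def)
  finally show ?thesis by (simp add: mult_left_mono)
qed

lemma taylor:
  fixes p a b t :: real assumes p: "p > 2" and t: "0 \<le> t" "t \<le> 1"
  shows "\<bar>b + t*a\<bar> powr p \<le> \<bar>b\<bar> powr p + p * t * sgp p b * a + (p*(p-1)/2 * 2 powr p) * t^2 * (\<bar>a\<bar> powr p + \<bar>b\<bar> powr p)"
proof -
  have "p*(p-1)/2 * (\<bar>a\<bar>+\<bar>b\<bar>) powr (p-2) * a^2 * t^2 = (p*(p-1)/2 * t^2) * ((\<bar>a\<bar>+\<bar>b\<bar>) powr (p-2) * a^2)"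
    by simp
  also have "\<dots> \<le> (p*(p-1)/2 * t^2) * (2 powr p * (\<bar>a\<bar> powr p + \<bar>b\<bar> powr p))"
    using p by (intro mult_left_mono L_bound) auto
  finally have "p*(p-1)/2 * (\<bar>a\<bar>+\<bar>b\<bar>) powr (p-2) * a^2 * t^2 \<le> (p*(p-1)/2 * 2 powr p) * t^2 * (\<bar>a\<bar> powr p + \<bar>b\<bar> powr p)"
    by (simp add: algebra_simps)
  then show ?thesis using taylor_raw[OF p t, of b a] by linarith
qed



lemma Lp_norm_nonneg: "Lp_norm M p f \<ge> 0" by (simp add: Lp_norm_def)

lemma Lp_norm_pow:
  assumes "p > 0" shows "Lp_norm M p f powr p = (\<integral>x. \<bar>f x\<bar> powr p \<partial>M)"
proof -
  have "(\<integral>x. \<bar>f x\<bar> powr p \<partial>M) \<ge> 0" by (intro integral_nonneg_AE) auto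
  then show ?thesis using assms by (simp add: Lp_norm_def powr_powr)
qed

lemma abs_sgp: "\<bar>sgp p y\<bar> = \<bar>y\<bar> powr (p - 1)"
  by (auto simp: sgp_def abs_mult sgn_if)

lemma sgp_measurable[measurable]:
  assumes [measurable]: "v \<in> borel_measurable M"
  shows "(\<lambda>x. sgp p (v x)) \<in> borel_measurable M"
  unfolding sgp_def by measurable

lemma powr_add_bound:
  fixes x y p :: real assumes "p > 0"
  shows "\<bar>x + y\<bar> powr p \<le> 2 powr p * (\<bar>x\<bar> powr p + \<bar>y\<bar> powr p)"
proof -
  define m where "m = max \<bar>x\<bar> \<bar>y\<bar>"
  have "\<bar>x + y\<bar> \<le> 2 * m" unfolding m_def by linarith
  then have "\<bar>x + y\<bar> powr p \<le> (2*m) powr p" using assms by (intro powr_mono2) auto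
  also have "\<dots> = 2 powr p * m powr p" by (simp add: powr_mult m_def)
  also have "m powr p \<le> \<bar>x\<bar> powr p + \<bar>y\<bar> powr p" by (auto simp: m_def max_def)
  finally show ?thesis by (simp add: mult_left_mono)
qed

lemma memLp_lin:
  assumes p: "p > 0" and f: "memLp M p f" and g: "memLp M p g"
  shows "memLp M p (\<lambda>x. a * f x + b * g x)"
proof -
  have [measurable]: "f \<in> borel_measurable M" "g \<in> borel_measurable M"
    using f g by (auto simp: memLp_def)
  have "integrable M (\<lambda>x. 2 powr p * (\<bar>a\<bar> powr p * \<bar>f x\<bar> powr p + \<bar>b\<bar> powr p * \<bar>g x\<bar> powr p))"
    using f g by (auto simp: memLp_def)
  then have "integrable M (\<lambda>x. \<bar>a * f x + b * g x\<bar> powr p)"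
  proof (rule Bochner_Integration.integrable_bound)
    show "AE x in M. norm (\<bar>a * f x + b * g x\<bar> powr p)
       \<le> norm (2 powr p * (\<bar>a\<bar> powr p * \<bar>f x\<bar> powr p + \<bar>b\<bar> powr p * \<bar>g x\<bar> powr p))"
      using powr_add_bound[OF p, of "a * f _" "b * g _"]
      by (intro AE_I2) (simp add: abs_mult powr_mult)
  qed measurable
  moreover have "(\<lambda>x. a * f x + b * g x) \<in> borel_measurable M" by measurable
  ultimately show ?thesis unfolding memLp_def by simp
qed

lemma memLp_diff:
  assumes p: "p > 0" and f: "memLp M p f" and g: "memLp M p g"
  shows "memLp M p (\<lambda>x. f x - g x)"
  using memLp_lin[OF p f g, of 1 "-1"] by simp

lemma memLp_AE0:
  assumes p: "p > 0" and f: "memLp M p f" and z: "Lp_norm M p f = 0"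
  shows "AE x in M. f x = 0"
proof -
  have "(\<integral>x. \<bar>f x\<bar> powr p \<partial>M) = 0" using Lp_norm_pow[OF p, of M f] z p by simp
  then have "AE x in M. \<bar>f x\<bar> powr p = 0"
    using f by (subst (asm) integral_nonneg_eq_0_iff_AE) (auto simp: memLp_def)
  then show ?thesis by auto
qed

lemma holder_sgp:
  assumes p: "p > 1" and f: "memLp M p f" and v: "memLp M p v"
  shows "integrable M (\<lambda>x. f x * sgp p (v x))"
    and "(\<integral>x. \<bar>f x\<bar> * \<bar>v x\<bar> powr (p - 1) \<partial>M) \<le> Lp_norm M p f * Lp_norm M p v powr (p - 1)"
proof -
  have [measurable]: "f \<in> borel_measurable M" "v \<in> borel_measurable M"
    using f v by (auto simp: memLp_def)
  have fi: "integrable M (\<lambda>x. \<bar>f x\<bar> powr p)" and vi: "integrable M (\<lambda>x. \<bar>v x\<bar> powr p)"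
    using f v by (auto simp: memLp_def)
  define q where "q = p / (p - 1)"
  have q: "q > 1" "1/p + 1/q = 1" using p by (auto simp: q_def field_simps)
  have pq: "(p - 1) * q = p" using p by (simp add: q_def)
  have young: "a * b powr (p-1) \<le> a powr p / p + b powr p / q" if "a \<ge> 0" "b \<ge> 0" for a b :: real
    using Youngs_inequality[OF p q(1) q(2) that(1), of "b powr (p-1)"] that
    by (simp add: powr_powr pq)
  have bnd: "\<bar>f x * sgp p (v x)\<bar> \<le> \<bar>f x\<bar> powr p + \<bar>v x\<bar> powr p" for x
  proof -
    have "\<bar>f x * sgp p (v x)\<bar> = \<bar>f x\<bar> * \<bar>v x\<bar> powr (p-1)" by (simp add: abs_mult abs_sgp)
    also have "\<dots> \<le> \<bar>f x\<bar> powr p / p + \<bar>v x\<bar> powr p / q" by (rule young) auto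
    also have "\<dots> \<le> \<bar>f x\<bar> powr p + \<bar>v x\<bar> powr p"
      using p q by (intro add_mono divide_left_mono[where b=1, simplified]) auto
    finally show ?thesis .
  qed
  show int: "integrable M (\<lambda>x. f x * sgp p (v x))"
    by (rule Bochner_Integration.integrable_bound[OF Bochner_Integration.integrable_add[OF fi vi]]) (use bnd in auto)
  have int2: "integrable M (\<lambda>x. \<bar>f x\<bar> * \<bar>v x\<bar> powr (p - 1))"
    using integrable_abs[OF int] by (simp add: abs_mult abs_sgp)
  show "(\<integral>x. \<bar>f x\<bar> * \<bar>v x\<bar> powr (p - 1) \<partial>M) \<le> Lp_norm M p f * Lp_norm M p v powr (p - 1)"
  proof (cases "Lp_norm M p f = 0 \<or> Lp_norm M p v = 0")
    case True
    then have "AE x in M. \<bar>f x\<bar> * \<bar>v x\<bar> powr (p - 1) = 0"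
    proof
      assume "Lp_norm M p f = 0"
      then show ?thesis using memLp_AE0[OF _ f] p by (auto elim: AE_mp)
    next
      assume "Lp_norm M p v = 0"
      then show ?thesis using memLp_AE0[OF _ v] p by (auto elim: AE_mp)
    qed
    then have "(\<integral>x. \<bar>f x\<bar> * \<bar>v x\<bar> powr (p - 1) \<partial>M) = 0"
      by (simp add: integral_eq_zero_AE)
    then show ?thesis by (simp add: Lp_norm_nonneg)
  next
    case False
    define \<alpha> where "\<alpha> = Lp_norm M p f"
    define \<beta> where "\<beta> = Lp_norm M p v"
    have ab: "\<alpha> > 0" "\<beta> > 0" using False Lp_norm_nonneg[of M p f] Lp_norm_nonneg[of M p v]
      by (auto simp: \<alpha>_def \<beta>_def)
    have Ia: "(\<integral>x. \<bar>f x\<bar> powr p \<partial>M) = \<alpha> powr p" using Lp_norm_pow[of p M f] p by (simp add: \<alpha>_def)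
    have Ib: "(\<integral>x. \<bar>v x\<bar> powr p \<partial>M) = \<beta> powr p" using Lp_norm_pow[of p M v] p by (simp add: \<beta>_def)
    have pw: "\<bar>f x\<bar> * \<bar>v x\<bar> powr (p - 1) / (\<alpha> * \<beta> powr (p-1))
        \<le> \<bar>f x\<bar> powr p / (p * \<alpha> powr p) + \<bar>v x\<bar> powr p / (q * \<beta> powr p)" for x
    proof -
      have "(\<bar>f x\<bar>/\<alpha>) * (\<bar>v x\<bar>/\<beta>) powr (p-1) \<le> (\<bar>f x\<bar>/\<alpha>) powr p / p + (\<bar>v x\<bar>/\<beta>) powr p / q"
        using ab by (intro young) auto
      then show ?thesis using ab by (simp add: powr_divide field_simps)
    qed
    have "(\<integral>x. \<bar>f x\<bar> * \<bar>v x\<bar> powr (p - 1) / (\<alpha> * \<beta> powr (p-1)) \<partial>M)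
        \<le> (\<integral>x. \<bar>f x\<bar> powr p / (p * \<alpha> powr p) + \<bar>v x\<bar> powr p / (q * \<beta> powr p) \<partial>M)"
      using int2 fi vi by (intro integral_mono pw) auto
    also have "\<dots> = (\<integral>x. \<bar>f x\<bar> powr p \<partial>M) / (p * \<alpha> powr p) + (\<integral>x. \<bar>v x\<bar> powr p \<partial>M) / (q * \<beta> powr p)"
      using fi vi by simp
    also have "\<dots> = 1/p + 1/q" using ab p q by (simp add: Ia Ib)
    finally have "(\<integral>x. \<bar>f x\<bar> * \<bar>v x\<bar> powr (p - 1) \<partial>M) / (\<alpha> * \<beta> powr (p-1)) \<le> 1"
      using q by simp
    then show ?thesis using ab by (simp add: \<alpha>_def[symmetric] \<beta>_def[symmetric] divide_le_eq)
  qed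
qed



definition phiv :: "'a measure \<Rightarrow> real \<Rightarrow> ('a \<Rightarrow> real) \<Rightarrow> ('a \<Rightarrow> real) \<Rightarrow> real" where
  "phiv M p v f = (\<integral>x. f x * sgp p (v x) \<partial>M)"

definition islin :: "'a measure \<Rightarrow> real \<Rightarrow> (('a \<Rightarrow> real) \<Rightarrow> real) \<Rightarrow> bool" where
  "islin M p \<phi> \<longleftrightarrow> (\<forall>f g a b. memLp M p f \<longrightarrow> memLp M p g \<longrightarrow>
        \<phi> (\<lambda>x. a * f x + b * g x) = a * \<phi> f + b * \<phi> g)"

lemma Lp_dualI:
  assumes "islin M p \<phi>" "\<And>f. memLp M p f \<Longrightarrow> \<bar>\<phi> f\<bar> \<le> C * Lp_norm M p f"
  shows "\<phi> \<in> Lp_dual M p"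
  using assms unfolding Lp_dual_def islin_def by blast

lemma phiv_lin:
  assumes p: "p > 1" and v: "memLp M p v"
  shows "islin M p (phiv M p v)"
  unfolding islin_def
proof (intro allI impI)
  fix f g :: "'a \<Rightarrow> real" and a b :: real
  assume f: "memLp M p f" and g: "memLp M p g"
  have i1: "integrable M (\<lambda>x. f x * sgp p (v x))" by (rule holder_sgp(1)[OF p f v])
  have i2: "integrable M (\<lambda>x. g x * sgp p (v x))" by (rule holder_sgp(1)[OF p g v])
  have "phiv M p v (\<lambda>x. a * f x + b * g x) = (\<integral>x. a * (f x * sgp p (v x)) + b * (g x * sgp p (v x)) \<partial>M)"
    unfolding phiv_def by (simp add: algebra_simps)
  also have "\<dots> = a * phiv M p v f + b * phiv M p v g"
    using i1 i2 by (simp add: phiv_def)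
  finally show "phiv M p v (\<lambda>x. a * f x + b * g x) = a * phiv M p v f + b * phiv M p v g" .
qed

lemma phiv_bound:
  assumes p: "p > 1" and v: "memLp M p v" and f: "memLp M p f"
  shows "\<bar>phiv M p v f\<bar> \<le> Lp_norm M p v powr (p - 1) * Lp_norm M p f"
proof -
  have "\<bar>phiv M p v f\<bar> \<le> (\<integral>x. \<bar>f x * sgp p (v x)\<bar> \<partial>M)"
    unfolding phiv_def using integral_norm_bound[of M "\<lambda>x. f x * sgp p (v x)"] by simp
  also have "\<dots> = (\<integral>x. \<bar>f x\<bar> * \<bar>v x\<bar> powr (p - 1) \<partial>M)" by (simp add: abs_mult abs_sgp)
  also have "\<dots> \<le> Lp_norm M p f * Lp_norm M p v powr (p - 1)" by (rule holder_sgp(2)[OF p f v])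
  finally show ?thesis by (simp add: mult.commute)
qed

lemma phiv_dual:
  assumes p: "p > 1" and v: "memLp M p v"
  shows "phiv M p v \<in> Lp_dual M p"
  using phiv_lin[OF p v] phiv_bound[OF p v] by (rule Lp_dualI)

lemma phiv_self:
  assumes p: "p > 1"
  shows "phiv M p v v = (\<integral>x. \<bar>v x\<bar> powr p \<partial>M)"
proof -
  have "v x * sgp p (v x) = \<bar>v x\<bar> powr p" for x
  proof (cases "v x = 0")
    case False
    have "v x * sgp p (v x) = \<bar>v x\<bar> * \<bar>v x\<bar> powr (p - 1)"
      by (auto simp: sgp_def sgn_if)
    also have "\<dots> = \<bar>v x\<bar> powr p" using False by (simp add: powr_diff)
    finally show ?thesis .
  qed (simp add: sgp_def)
  then show ?thesis by (simp add: phiv_def)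
qed

lemma weak_diff:
  assumes p: "p > 0" and wc: "Lp_weak_conv M p u U" and u: "\<And>k. memLp M p (u k)" and U: "memLp M p U"
    and \<phi>: "\<phi> \<in> Lp_dual M p"
  shows "(\<lambda>k. \<phi> (\<lambda>x. u k x - U x)) \<longlonglongrightarrow> 0"
proof -
  have lin: "\<phi> (\<lambda>x. 1 * u k x + (-1) * U x) = 1 * \<phi> (u k) + (-1) * \<phi> U" for k
    using \<phi> u U unfolding Lp_dual_def by blast
  have "(\<lambda>k. \<phi> (u k) - \<phi> U) \<longlonglongrightarrow> \<phi> U - \<phi> U"
    using wc \<phi> unfolding Lp_weak_conv_def by (intro tendsto_diff) auto
  then show ?thesis using lin by simp
qed

lemma norming:
  assumes p: "p > 1" and w: "memLp M p w"
  shows "\<exists>\<psi>. islin M p \<psi> \<and> (\<forall>f. memLp M p f \<longrightarrow> \<bar>\<psi> f\<bar> \<le> Lp_norm M p f) \<and> \<psi> w = Lp_norm M p w"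
proof (cases "Lp_norm M p w = 0")
  case True
  then show ?thesis by (intro exI[of _ "\<lambda>f. 0"]) (auto simp: islin_def Lp_norm_nonneg)
next
  case False
  define N where "N = Lp_norm M p w"
  have Np: "N > 0" using False Lp_norm_nonneg[of M p w] by (simp add: N_def)
  define \<psi> where "\<psi> f = phiv M p w f / N powr (p - 1)" for f
  have "islin M p \<psi>" using phiv_lin[OF p w] unfolding islin_def \<psi>_def by (simp add: add_divide_distrib)
  moreover have "\<bar>\<psi> f\<bar> \<le> Lp_norm M p f" if "memLp M p f" for f
    using phiv_bound[OF p w that] Np by (simp add: \<psi>_def N_def[symmetric] divide_le_eq abs_divide mult.commute)
  moreover have "\<psi> w = N"
  proof -
    have "\<psi> w = N powr p / N powr (p - 1)"
      unfolding \<psi>_def phiv_self[OF p] N_def using Lp_norm_pow[of p M w] p by simp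
    also have "\<dots> = N" using Np by (simp add: powr_diff)
    finally show ?thesis .
  qed
  ultimately show ?thesis by (auto simp: N_def)
qed



primrec kseq :: "('b list \<Rightarrow> 'b) \<Rightarrow> nat \<Rightarrow> 'b list" where
  "kseq ch 0 = []"
| "kseq ch (Suc n) = kseq ch n @ [ch (kseq ch n)]"

lemma kseq_length: "length (kseq ch n) = n"
  by (induction n) auto

lemma kseq_nth: "j < n \<Longrightarrow> kseq ch n ! j = ch (kseq ch j)"
proof (induction n)
  case 0 then show ?case by simp
next
  case (Suc n)
  show ?case
  proof (cases "j < n")
    case True then show ?thesis using Suc by (simp add: nth_append kseq_length)
  next
    case False then have "j = n" using Suc by simp
    then show ?thesis by (simp add: nth_append kseq_length)
  qed
qed

lemma bounded_weak:
  assumes p: "p > 1" and w: "\<And>k. memLp M p (w k)"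
    and conv: "\<And>\<phi>. \<phi> \<in> Lp_dual M p \<Longrightarrow> (\<lambda>k. \<phi> (w k)) \<longlonglongrightarrow> 0"
  shows "\<exists>B. \<forall>k. Lp_norm M p (w k) \<le> B"
proof (rule ccontr)
  assume nb: "\<not> (\<exists>B. \<forall>k. Lp_norm M p (w k) \<le> B)"
  define Nk where "Nk k = Lp_norm M p (w k)" for k
  have unb: "\<exists>k\<ge>K. Nk k > B" for K B
  proof (rule ccontr)
    assume "\<not> (\<exists>k\<ge>K. Nk k > B)"
    then have "Nk k \<le> max B (Max (Nk ` {..<K}))" for k
    proof (cases "k < K")
      case True
      then have "Nk k \<le> Max (Nk ` {..<K})" by (intro Max_ge) auto
      then show ?thesis by linarith
    next
      case False
      then show ?thesis using \<open>\<not> (\<exists>k\<ge>K. Nk k > B)\<close> by (auto simp: not_less)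
    qed
    then show False using nb by (auto simp: Nk_def)
  qed
  obtain \<Psi> where \<Psi>: "\<And>k. islin M p (\<Psi> k)" "\<And>k f. memLp M p f \<Longrightarrow> \<bar>\<Psi> k f\<bar> \<le> Lp_norm M p f"
      "\<And>k. \<Psi> k (w k) = Nk k"
    using norming[OF p w] unfolding Nk_def by metis
  have \<Psi>dual: "\<Psi> k \<in> Lp_dual M p" for k
    by (rule Lp_dualI[OF \<Psi>(1), where C=1]) (use \<Psi>(2) in auto)
  define T :: "nat \<Rightarrow> real" where "T m = 3 * (real m + 2) * 4 ^ m" for m
  define good where "good xs k \<longleftrightarrow> k \<ge> length xs \<and> Nk k \<ge> T (length xs) \<and>
      (\<forall>j\<in>{..<length xs}. \<bar>\<Psi> (xs ! j) (w k)\<bar> \<le> 1)" for xs k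
  have exgood: "\<exists>k. good xs k" for xs
  proof -
    have "eventually (\<lambda>k. \<forall>j\<in>{..<length xs}. \<bar>\<Psi> (xs ! j) (w k)\<bar> < 1) sequentially"
    proof (rule eventually_ball_finite)
      show "\<forall>j\<in>{..<length xs}. eventually (\<lambda>k. \<bar>\<Psi> (xs ! j) (w k)\<bar> < 1) sequentially"
      proof
        fix j
        have "(\<lambda>k. \<bar>\<Psi> (xs ! j) (w k)\<bar>) \<longlonglongrightarrow> \<bar>0\<bar>"
          by (intro tendsto_rabs conv \<Psi>dual)
        then show "eventually (\<lambda>k. \<bar>\<Psi> (xs ! j) (w k)\<bar> < 1) sequentially"
          by (rule order_tendstoD) simp
      qed
    qed simp
    then obtain K where K: "\<And>k. k \<ge> K \<Longrightarrow> \<forall>j\<in>{..<length xs}. \<bar>\<Psi> (xs ! j) (w k)\<bar> < 1"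
      unfolding eventually_sequentially by blast
    obtain k where k: "k \<ge> max K (length xs)" "Nk k > T (length xs)" using unb by blast
    then show ?thesis using K[of k] unfolding good_def by (auto intro: less_imp_le)
  qed
  define ch where "ch xs = (SOME k. good xs k)" for xs
  have chgood: "good xs (ch xs)" for xs unfolding ch_def using exgood by (rule someI_ex)
  define kk where "kk m = ch (kseq ch m)" for m
  have kk: "kk m \<ge> m" "Nk (kk m) \<ge> T m" "\<And>j. j < m \<Longrightarrow> \<bar>\<Psi> (kk j) (w (kk m))\<bar> \<le> 1" for m
    using chgood[of "kseq ch m"] unfolding good_def kk_def by (auto simp: kseq_length kseq_nth)
  define c :: "nat \<Rightarrow> real" where "c j = (1/4) ^ j" for j
  have csums: "c sums (4/3)" unfolding c_def using geometric_sums[of "1/4::real"] by simp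
  have cnn: "c j \<ge> 0" for j by (simp add: c_def)
  define \<phi> where "\<phi> f = (\<Sum>j. c j * \<Psi> (kk j) f)" for f
  have summ: "summable (\<lambda>j. c j * \<Psi> (kk j) f)" if "memLp M p f" for f
  proof (rule summable_comparison_test')
    show "summable (\<lambda>j. c j * Lp_norm M p f)" using csums by (intro summable_mult2) (auto simp: sums_iff)
    show "norm (c j * \<Psi> (kk j) f) \<le> c j * Lp_norm M p f" for j
      using \<Psi>(2)[OF that, of "kk j"] cnn[of j] by (simp add: abs_mult mult_left_mono)
  qed
  have \<phi>dual: "\<phi> \<in> Lp_dual M p"
  proof (rule Lp_dualI)
    show "islin M p \<phi>" unfolding islin_def
    proof (intro allI impI)
      fix f g :: "'a \<Rightarrow> real" and a b :: real
      assume f: "memLp M p f" and g: "memLp M p g"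
      have "\<phi> (\<lambda>x. a * f x + b * g x) = (\<Sum>j. a * (c j * \<Psi> (kk j) f) + b * (c j * \<Psi> (kk j) g))"
        unfolding \<phi>_def using \<Psi>(1) f g unfolding islin_def by (simp add: algebra_simps)
      also have "\<dots> = (\<Sum>j. a * (c j * \<Psi> (kk j) f)) + (\<Sum>j. b * (c j * \<Psi> (kk j) g))"
        using summ[OF f] summ[OF g] by (intro suminf_add[symmetric] summable_mult)
      also have "\<dots> = a * \<phi> f + b * \<phi> g"
        using summ[OF f] summ[OF g] unfolding \<phi>_def by (simp add: suminf_mult)
      finally show "\<phi> (\<lambda>x. a * f x + b * g x) = a * \<phi> f + b * \<phi> g" .
    qed
  next
    fix f assume f: "memLp M p f"
    have sm: "summable (\<lambda>j. c j * Lp_norm M p f)" using csums by (intro summable_mult2) (auto simp: sums_iff)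
    have bd: "\<bar>c j * \<Psi> (kk j) f\<bar> \<le> c j * Lp_norm M p f" for j
      using \<Psi>(2)[OF f, of "kk j"] cnn[of j] by (simp add: abs_mult mult_left_mono)
    have sabs: "summable (\<lambda>j. \<bar>c j * \<Psi> (kk j) f\<bar>)"
      by (rule summable_comparison_test'[OF sm]) (use bd in auto)
    have "\<bar>\<phi> f\<bar> \<le> (\<Sum>j. \<bar>c j * \<Psi> (kk j) f\<bar>)"
      unfolding \<phi>_def by (rule summable_rabs[OF sabs])
    also have "\<dots> \<le> (\<Sum>j. c j * Lp_norm M p f)"
      by (rule suminf_le[OF bd sabs sm])
    also have "\<dots> = 4/3 * Lp_norm M p f" using csums by (simp add: suminf_mult2[symmetric] sums_iff)
    finally show "\<bar>\<phi> f\<bar> \<le> 4/3 * Lp_norm M p f" .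
  qed
  have lower: "\<phi> (w (kk m)) \<ge> real m" for m
  proof -
    define W where "W = w (kk m)"
    define Nw where "Nw = Nk (kk m)"
    have NwT: "Nw \<ge> T m" using kk(2) by (simp add: Nw_def)
    have Nwnn: "Nw \<ge> 0" by (simp add: Nw_def Nk_def Lp_norm_nonneg)
    define t where "t j = c j * \<Psi> (kk j) W" for j
    define e where "e j = c j + (if m < j then c j * Nw else 0)" for j
    define d where "d j = (if j = m then c m * Nw + e j else 0) - e j" for j
    have tm: "t m = c m * Nw" by (simp add: t_def W_def Nw_def \<Psi>(3))
    have td: "d j \<le> t j" for j
    proof (cases "j = m")
      case True then show ?thesis by (simp add: d_def tm)
    next
      case False
      have "\<bar>t j\<bar> \<le> e j"
      proof (cases "j < m")
        case True
        have "\<bar>t j\<bar> = c j * \<bar>\<Psi> (kk j) W\<bar>" by (simp add: t_def abs_mult c_def)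
        also have "\<dots> \<le> c j * 1" using kk(3)[OF True] cnn[of j] by (intro mult_left_mono) (auto simp: W_def)
        finally show ?thesis using True by (simp add: e_def)
      next
        case False
        then have mj: "m < j" using \<open>j \<noteq> m\<close> by simp
        have "\<bar>t j\<bar> = c j * \<bar>\<Psi> (kk j) W\<bar>" by (simp add: t_def abs_mult c_def)
        also have "\<dots> \<le> c j * Nw" using \<Psi>(2)[OF w, of "kk j" "kk m"] cnn[of j]
          by (intro mult_left_mono) (auto simp: W_def Nw_def Nk_def)
        finally show ?thesis using mj cnn[of j] by (simp add: e_def)
      qed
      then show ?thesis using False by (simp add: d_def)
    qed
    have tsum: "t sums \<phi> W" unfolding t_def \<phi>_def using summ[OF w[of "kk m"]]
      by (simp add: W_def summable_sums)
    have tail: "(\<lambda>j. if m < j then c j * Nw else 0) sums (c m * Nw / 3)"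
    proof -
      have "(\<lambda>i. c (i + Suc m) * Nw) sums ((1/4) ^ Suc m * Nw * (4/3))"
      proof -
        have "(\<lambda>i. (1/4) ^ Suc m * Nw * c i) sums ((1/4) ^ Suc m * Nw * (4/3))"
          by (intro sums_mult csums)
        then show ?thesis by (simp add: c_def power_add mult_ac)
      qed
      then have "(\<lambda>i. (\<lambda>j. if m < j then c j * Nw else 0) (i + Suc m)) sums (c m * Nw / 3)"
        by (simp add: c_def)
      then show ?thesis by (subst (asm) sums_iff_shift) simp
    qed
    have esum: "e sums (4/3 + c m * Nw / 3)" unfolding e_def by (intro sums_add csums tail)
    have dsum: "d sums (c m * Nw + c m - (4/3 + c m * Nw / 3))"
    proof -
      have "(\<lambda>j. if j = m then c m * Nw + e j else 0) sums (c m * Nw + e m)"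
        using sums_single[of m "\<lambda>j. c m * Nw + e j"] by simp
      from sums_diff[OF this esum]
      have "(\<lambda>j. (if j = m then c m * Nw + e j else 0) - e j) sums (c m * Nw + e m - (4/3 + c m * Nw / 3))" .
      moreover have "e m = c m" by (simp add: e_def)
      moreover have "d = (\<lambda>j. (if j = m then c m * Nw + e j else 0) - e j)" by (simp add: d_def fun_eq_iff)
      ultimately show ?thesis by simp
    qed
    have "c m * Nw + c m - (4/3 + c m * Nw / 3) \<le> \<phi> W" by (rule sums_le[OF td dsum tsum])
    moreover have "c m * Nw \<ge> c m * T m" using NwT cnn[of m] by (rule mult_left_mono)
    moreover have "c m * T m = 3 * (real m + 2)"
      by (simp add: c_def T_def power_mult_distrib[symmetric])
    ultimately show ?thesis using cnn[of m] by (simp add: W_def mult.commute)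
  qed
  have "eventually (\<lambda>k. \<bar>\<phi> (w k)\<bar> < 1) sequentially"
  proof -
    have "(\<lambda>k. \<bar>\<phi> (w k)\<bar>) \<longlonglongrightarrow> \<bar>0\<bar>" by (intro tendsto_rabs conv \<phi>dual)
    then show ?thesis by (rule order_tendstoD) simp
  qed
  then obtain K where K: "\<And>k. k \<ge> K \<Longrightarrow> \<bar>\<phi> (w k)\<bar> < 1" unfolding eventually_sequentially by blast
  have "\<bar>\<phi> (w (kk (Suc K)))\<bar> < 1" using K kk(1)[of "Suc K"] by simp
  moreover have "\<phi> (w (kk (Suc K))) \<ge> real (Suc K)" by (rule lower)
  ultimately show False by simp
qed



lemma norm_gap:
  fixes p y z \<eta> R :: real
  assumes p: "p \<ge> 1" and y: "0 \<le> y" "y \<le> R" and z: "0 \<le> z" and eta: "\<eta> > 0"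
    and gap: "z powr p \<le> y powr p - \<eta>"
  shows "y - z \<ge> \<eta> / (p * R powr (p - 1))"
proof -
  have tan: "y powr p + p * y powr (p-1) * (z - y) \<le> z powr p" by (rule powr_tangent[OF p y(1) z])
  then have A: "\<eta> \<le> p * y powr (p-1) * (y - z)" using gap by (simp add: algebra_simps)
  have yz: "y - z > 0"
  proof (rule ccontr)
    assume "\<not> y - z > 0"
    then have "p * y powr (p-1) * (y - z) \<le> 0" using p by (intro mult_nonneg_nonpos) auto
    then show False using A eta by simp
  qed
  have Rp: "R > 0"
  proof (rule ccontr)
    assume "\<not> R > 0"
    then have "y = 0" using y by simp
    then show False using yz z by simp
  qed
  have "p * y powr (p-1) * (y - z) \<le> p * R powr (p-1) * (y - z)"
    using p y yz by (intro mult_right_mono mult_left_mono powr_mono2) auto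
  with A have "\<eta> \<le> p * R powr (p-1) * (y - z)" by simp
  moreover have "p * R powr (p-1) > 0" using p Rp by simp
  ultimately show ?thesis by (simp add: divide_le_eq mult.commute)
qed

theorem theorem4p2:
  fixes M :: "'a measure" and p :: real
    and u :: "nat \<Rightarrow> 'a \<Rightarrow> real" and U :: "'a \<Rightarrow> real"
  assumes "p \<ge> 3"
    and "\<And>k. memLp M p (u k)" and "memLp M p U"
    and "Lp_weak_conv M p u U"
    and "Lp_Delta_conv M p u U"
  shows "liminf (\<lambda>k. ereal ((\<integral>x. \<bar>u k x\<bar> powr p \<partial>M) - (\<integral>x. \<bar>U x\<bar> powr p \<partial>M)
            - (\<integral>x. \<bar>u k x - U x\<bar> powr p \<partial>M))) \<ge> 0"
proof -
  have p3: "p \<ge> 3" and u: "\<And>k. memLp M p (u k)" and U: "memLp M p U"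
    and wc: "Lp_weak_conv M p u U" and dc: "Lp_Delta_conv M p u U" using assms by auto
  have p1: "p > 1" and p0: "p > 0" and p2: "p > 2" using p3 by auto
  define w where "w k = (\<lambda>x. u k x - U x)" for k
  have wm: "memLp M p (w k)" for k unfolding w_def by (rule memLp_diff[OF p0 u U])
  have [measurable]: "U \<in> borel_measurable M" "\<And>k. u k \<in> borel_measurable M" "\<And>k. w k \<in> borel_measurable M"
    using U u wm by (auto simp: memLp_def)
  have Ui: "integrable M (\<lambda>x. \<bar>U x\<bar> powr p)" using U by (simp add: memLp_def)
  have ui: "integrable M (\<lambda>x. \<bar>u k x\<bar> powr p)" for k using u by (simp add: memLp_def)
  have wi: "integrable M (\<lambda>x. \<bar>w k x\<bar> powr p)" for k using wm by (simp add: memLp_def)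
  define I where "I f = (\<integral>x. \<bar>f x\<bar> powr p \<partial>M)" for f :: "'a \<Rightarrow> real"
  have Inn: "I f \<ge> 0" for f unfolding I_def by (intro integral_nonneg_AE) auto
  have INp: "Lp_norm M p f powr p = I f" for f unfolding I_def by (rule Lp_norm_pow[OF p0])
  have "\<exists>B. \<forall>k. Lp_norm M p (w k) \<le> B"
  proof (rule bounded_weak[OF p1 wm])
    fix \<phi> assume "\<phi> \<in> Lp_dual M p"
    then show "(\<lambda>k. \<phi> (w k)) \<longlonglongrightarrow> 0" unfolding w_def by (rule weak_diff[OF p0 wc u U])
  qed
  then obtain B0 where B0: "\<And>k. Lp_norm M p (w k) \<le> B0" by blast
  define R1 where "R1 = max 1 B0"
  have R1: "R1 > 0" "\<And>k. Lp_norm M p (w k) \<le> R1"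
    using B0 by (auto simp: R1_def le_max_iff_disj)
  define B where "B = R1 powr p"
  have IB: "I (w k) \<le> B" for k
  proof -
    have "Lp_norm M p (w k) powr p \<le> R1 powr p"
      using R1(2)[of k] p0 by (intro powr_mono2) (auto simp: Lp_norm_nonneg)
    then show ?thesis by (simp add: INp B_def)
  qed
  have Bnn: "B \<ge> 0" by (simp add: B_def)
  define A where "A k = phiv M p U (w k)" for k
  define J where "J k = phiv M p (w k) U" for k
  have Alim: "A \<longlonglongrightarrow> 0" unfolding A_def w_def by (rule weak_diff[OF p0 wc u U phiv_dual[OF p1 U]])
  have Fbound: "p * A k + p * J k \<le> I (u k) - I U - I (w k)" for k
  proof -
    have i1: "integrable M (\<lambda>x. w k x * sgp p (U x))" by (rule holder_sgp(1)[OF p1 wm U])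
    have i2: "integrable M (\<lambda>x. U x * sgp p (w k x))" by (rule holder_sgp(1)[OF p1 U wm])
    have "(\<integral>x. p * (w k x * sgp p (U x)) + p * (U x * sgp p (w k x)) \<partial>M)
        \<le> (\<integral>x. \<bar>U x + w k x\<bar> powr p - \<bar>U x\<bar> powr p - \<bar>w k x\<bar> powr p \<partial>M)"
    proof (rule integral_mono)
      show "integrable M (\<lambda>x. p * (w k x * sgp p (U x)) + p * (U x * sgp p (w k x)))"
        using i1 i2 by auto
      have "integrable M (\<lambda>x. \<bar>u k x\<bar> powr p - \<bar>U x\<bar> powr p - \<bar>w k x\<bar> powr p)"
        using ui Ui wi by auto
      then show "integrable M (\<lambda>x. \<bar>U x + w k x\<bar> powr p - \<bar>U x\<bar> powr p - \<bar>w k x\<bar> powr p)"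
        by (simp add: w_def)
      show "p * (w k x * sgp p (U x)) + p * (U x * sgp p (w k x))
          \<le> \<bar>U x + w k x\<bar> powr p - \<bar>U x\<bar> powr p - \<bar>w k x\<bar> powr p" for x
        using ineq5[OF p3, of "U x" "w k x"] by (simp add: algebra_simps)
    qed
    also have "\<dots> = I (u k) - I U - I (w k)"
      using ui Ui wi by (simp add: I_def w_def)
    also have "(\<integral>x. p * (w k x * sgp p (U x)) + p * (U x * sgp p (w k x)) \<partial>M)
        = p * A k + p * J k" using i1 i2 by (simp add: A_def J_def phiv_def)
    finally show ?thesis .
  qed
  have Jev: "eventually (\<lambda>k. J k > -\<delta>) sequentially" if \<delta>: "\<delta> > 0" for \<delta>
  proof -
    define K0 where "K0 = p*(p-1)/2 * 2 powr p"
    have K0: "K0 > 0" using p3 by (simp add: K0_def)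
    define R where "R = I U + B"
    have Rnn: "R \<ge> 0" using Inn[of U] Bnn by (simp add: R_def)
    define t where "t = min 1 (p * \<delta> / (2 * K0 * (R + 1)))"
    have t: "0 < t" "t \<le> 1" using p3 \<delta> K0 Rnn by (auto simp: t_def)
    have tK: "K0 * t * R \<le> p * \<delta> / 2"
    proof -
      have "t \<le> p * \<delta> / (2 * K0 * (R + 1))" by (simp add: t_def)
      then have "t * (2 * K0 * (R + 1)) \<le> p * \<delta>" using K0 Rnn by (simp add: le_divide_eq)
      moreover have "K0 * t * R \<le> K0 * t * (R + 1)" using K0 t by simp
      ultimately show ?thesis by (simp add: algebra_simps)
    qed
    define \<eta> where "\<eta> = p * t * \<delta> / 2"
    have \<eta>: "\<eta> > 0" using p3 t \<delta> by (simp add: \<eta>_def)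
    define v where "v = (\<lambda>x. (1 - t) * U x)"
    have vm: "memLp M p v" unfolding v_def using memLp_lin[OF p0 U U, of "1 - t" 0] by simp
    define Z where "Z k = (\<lambda>x. u k x - v x)" for k
    have Zw: "Z k x = w k x + t * U x" for k x by (simp add: Z_def v_def w_def algebra_simps)
    have taylorI: "I (Z k) \<le> I (w k) + p * t * J k + K0 * t^2 * (I U + I (w k))" for k
    proof -
      have Zm: "memLp M p (Z k)" unfolding Z_def by (rule memLp_diff[OF p0 u vm])
      have i2: "integrable M (\<lambda>x. U x * sgp p (w k x))" by (rule holder_sgp(1)[OF p1 U wm])
      have "I (Z k) \<le> (\<integral>x. \<bar>w k x\<bar> powr p + p * t * (U x * sgp p (w k x)) + K0 * t^2 * (\<bar>U x\<bar> powr p + \<bar>w k x\<bar> powr p) \<partial>M)"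
        unfolding I_def
      proof (rule integral_mono)
        show "integrable M (\<lambda>x. \<bar>Z k x\<bar> powr p)" using Zm by (simp add: memLp_def)
        show "integrable M (\<lambda>x. \<bar>w k x\<bar> powr p + p * t * (U x * sgp p (w k x)) + K0 * t^2 * (\<bar>U x\<bar> powr p + \<bar>w k x\<bar> powr p))"
          using wi Ui i2 by auto
        show "\<bar>Z k x\<bar> powr p \<le> \<bar>w k x\<bar> powr p + p * t * (U x * sgp p (w k x)) + K0 * t^2 * (\<bar>U x\<bar> powr p + \<bar>w k x\<bar> powr p)" for x
          using taylor[OF p2 less_imp_le[OF t(1)] t(2), of "w k x" "U x"] unfolding Zw K0_def by (simp add: algebra_simps)
      qed
      also have "\<dots> = I (w k) + p * t * J k + K0 * t^2 * (I U + I (w k))"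
        using wi Ui i2 by (simp add: I_def J_def phiv_def)
      finally show ?thesis .
    qed
    define c where "c = \<eta> / (p * R1 powr (p - 1))"
    have c: "c > 0" using \<eta> p3 R1 by (simp add: c_def)
    have "limsup (\<lambda>k. ereal (Lp_norm M p (\<lambda>x. u k x - U x) - Lp_norm M p (\<lambda>x. u k x - v x))) \<le> 0"
      using dc vm unfolding Lp_Delta_conv_def by blast
    then have "limsup (\<lambda>k. ereal (Lp_norm M p (\<lambda>x. u k x - U x) - Lp_norm M p (\<lambda>x. u k x - v x))) < ereal c"
      using c by (simp add: le_less_trans)
    then have ev: "eventually (\<lambda>k. ereal (Lp_norm M p (w k) - Lp_norm M p (Z k)) < ereal c) sequentially"
      unfolding w_def Z_def by (rule Limsup_lessD)
    show ?thesis
    proof (rule eventually_mono[OF ev])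
      fix k assume lt: "ereal (Lp_norm M p (w k) - Lp_norm M p (Z k)) < ereal c"
      show "J k > -\<delta>"
      proof (rule ccontr)
        assume "\<not> J k > -\<delta>"
        then have Jd: "J k \<le> -\<delta>" by simp
        have "I (Z k) \<le> I (w k) + p * t * J k + K0 * t^2 * (I U + I (w k))" by (rule taylorI)
        also have "p * t * J k \<le> p * t * (-\<delta>)" using Jd p3 t by (intro mult_left_mono) auto
        also have "K0 * t^2 * (I U + I (w k)) \<le> t * (p * \<delta> / 2)"
        proof -
          have "I U + I (w k) \<le> R" using IB[of k] by (simp add: R_def)
          then have "K0 * t^2 * (I U + I (w k)) \<le> K0 * t^2 * R"
            using K0 t by (intro mult_left_mono) auto
          also have "\<dots> = t * (K0 * t * R)" by (simp add: power2_eq_square)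
          also have "\<dots> \<le> t * (p * \<delta> / 2)" using tK t by (intro mult_left_mono) auto
          finally show ?thesis .
        qed
        finally have gapI: "I (Z k) \<le> I (w k) - \<eta>" using tK by (simp add: \<eta>_def algebra_simps)
        have "Lp_norm M p (w k) - Lp_norm M p (Z k) \<ge> \<eta> / (p * R1 powr (p - 1))"
          by (rule norm_gap) (use p3 R1 \<eta> gapI in \<open>auto simp: Lp_norm_nonneg INp\<close>)
        then show False using lt by (simp add: c_def)
      qed
    qed
  qed
  show ?thesis
  proof (subst le_Liminf_iff, intro allI impI)
    fix y :: ereal assume y: "y < 0"
    show "eventually (\<lambda>k. y < ereal ((\<integral>x. \<bar>u k x\<bar> powr p \<partial>M) - (\<integral>x. \<bar>U x\<bar> powr p \<partial>M)
            - (\<integral>x. \<bar>u k x - U x\<bar> powr p \<partial>M))) sequentially"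
    proof (cases y)
      case (real r)
      then have r: "r < 0" using y by simp
      define \<epsilon> where "\<epsilon> = - r / (2 * p)"
      have \<epsilon>: "\<epsilon> > 0" using r p3 by (simp add: \<epsilon>_def divide_neg_pos)
      have e1: "eventually (\<lambda>k. \<bar>A k\<bar> < \<epsilon>) sequentially"
      proof -
        have "(\<lambda>k. \<bar>A k\<bar>) \<longlonglongrightarrow> \<bar>0\<bar>" by (intro tendsto_rabs Alim)
        then show ?thesis by (rule order_tendstoD) (use \<epsilon> in simp)
      qed
      show ?thesis
      proof (rule eventually_mono[OF eventually_conj[OF e1 Jev[OF \<epsilon>]]])
        fix k assume k: "\<bar>A k\<bar> < \<epsilon> \<and> - \<epsilon> < J k"
        have "p * A k > p * (-\<epsilon>)" using k p3 by (intro mult_strict_left_mono) auto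
        moreover have "p * J k > p * (-\<epsilon>)" using k p3 by (intro mult_strict_left_mono) auto
        moreover have "p * \<epsilon> = - r / 2" using p3 by (simp add: \<epsilon>_def)
        ultimately have "r < p * A k + p * J k" by linarith
        also have "\<dots> \<le> I (u k) - I U - I (w k)" by (rule Fbound)
        finally show "y < ereal ((\<integral>x. \<bar>u k x\<bar> powr p \<partial>M) - (\<integral>x. \<bar>U x\<bar> powr p \<partial>M)
            - (\<integral>x. \<bar>u k x - U x\<bar> powr p \<partial>M))"
          using real by (simp add: I_def w_def)
      qed
    qed (use y in auto)
  qed
qed


end
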